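(* Let $m,d \in \mathbb{N}$, let $A \in \mathbb{R}^{m\times d}$ with rows $a_1^\top,\dots,a_m^\top$ (so $a_i \in \mathbb{R}^d$), let $b=(b_1,\dots,b_m) \in \mathbb{R}^m$ and $c \in \mathbb{R}^d$. For $\hat{x} \in [0,1]^d$ let $P_{\hat{x}} := \bigotimes_{j=1}^d \mathrm{Bernoulli}(\hat{x}_j)$ be the product distribution on $\{0,1\}^d$ whose $j$-th coordinate equals $1$ with probability $\hat{x}_j$, independently across coordinates. Suppose there exists some $x \in \{0,1\}^d$ with $Ax \preccurlyeq b$. Define \[ \delta := \min\Big( \{1\} \cup \Big( \bigcup_{i=1}^m \{ a_i^\top x - b_i : x \in \{0,1\}^d \} \cap (0,\infty) \Big) \Big). \] Then for every $\mu > \dfrac{2\sqrt{d}\,\|c\|_2}{\delta}$, \[ \mathop{\arg\min}_{\hat{x} \in [0,1]^d} \Big( c^\top \hat{x} + \mu \sum_{i=1}^m \mathbb{E}_{x \sim P_{\hat{x}}}\big[\max\{a_i^\top x - b_i, 0\}\big] \Big) = \mathop{\arg\min}_{\hat{x} \in [0,1]^d:\ \sum_{i=1}^m \mathbb{E}_{x \sim P_{\hat{x}}}[\max\{a_i^\top x - b_i, 0\}] = 0} c^\top \hat{x}. \]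
   Context: $\preccurlyeq$ denotes componentwise inequality between vectors in $\mathbb{R}^m$. $\|c\|_2$ is the Euclidean norm. The left-hand side is the set of minimizers over the cube $[0,1]^d$ of the penalized objective; the right-hand side is the set of minimizers of $c^\top\hat{x}$ over those $\hat{x}\in[0,1]^d$ for which the total expected constraint violation is zero. *)

theory Defs
  imports "HOL-Probability.Probability"
begin

text \<open>Vectors in R^d are functions nat => real, with components outside {0..<d} fixed to 0
  (canonical representatives). The matrix A is given as A i j for i < m, j < d.\<close>

definition cube :: "nat \<Rightarrow> (nat \<Rightarrow> real) set" where
  "cube d = {x. (\<forall>j<d. 0 \<le> x j \<and> x j \<le> 1) \<and> (\<forall>j\<ge>d. x j = 0)}"

definition binvecs :: "nat \<Rightarrow> (nat \<Rightarrow> real) set" where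
  "binvecs d = {x. (\<forall>j<d. x j \<in> {0, 1}) \<and> (\<forall>j\<ge>d. x j = 0)}"

definition prodBern :: "nat \<Rightarrow> (nat \<Rightarrow> real) \<Rightarrow> (nat \<Rightarrow> bool) pmf" where
  "prodBern d xh = Pi_pmf {..<d} False (\<lambda>j. bernoulli_pmf (xh j))"

definition exp_viol ::
  "nat \<Rightarrow> nat \<Rightarrow> (nat \<Rightarrow> nat \<Rightarrow> real) \<Rightarrow> (nat \<Rightarrow> real) \<Rightarrow> (nat \<Rightarrow> real) \<Rightarrow> real" where
  "exp_viol m d A b xh = (\<Sum>i<m. measure_pmf.expectation (prodBern d xh)
      (\<lambda>x. max ((\<Sum>j<d. A i j * of_bool (x j)) - b i) 0))"

definition delta :: "nat \<Rightarrow> nat \<Rightarrow> (nat \<Rightarrow> nat \<Rightarrow> real) \<Rightarrow> (nat \<Rightarrow> real) \<Rightarrow> real" where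
  "delta m d A b = Min ({1} \<union> ((\<Union>i<m. {(\<Sum>j<d. A i j * x j) - b i | x. x \<in> binvecs d}) \<inter> {0<..}))"

definition enorm :: "nat \<Rightarrow> (nat \<Rightarrow> real) \<Rightarrow> real" where
  "enorm d c = sqrt (\<Sum>j<d. (c j)\<^sup>2)"

definition argmin_on :: "('a \<Rightarrow> real) \<Rightarrow> 'a set \<Rightarrow> 'a set" where
  "argmin_on f S = {x \<in> S. \<forall>y\<in>S. f x \<le> f y}"

end

theory Submission imports Defs begin

definition Vset :: "nat \<Rightarrow> (nat \<Rightarrow> bool) set" where
  "Vset d = {x. \<forall>j. j \<notin> {..<d} \<longrightarrow> x j = False}"

lemma finite_Vset: "finite (Vset d)"
  unfolding Vset_def using finite_set_of_finite_funs[of "{..<d}" "UNIV::bool set" False] by simp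

lemma supp_prodBern: "set_pmf (prodBern d xh) \<subseteq> Vset d"
  unfolding prodBern_def Vset_def by (rule set_Pi_pmf_subset) simp

lemma finite_supp: "finite (set_pmf (prodBern d xh))"
  using supp_prodBern finite_Vset finite_subset by blast

lemma integ: "integrable (measure_pmf (prodBern d xh)) (f :: _ \<Rightarrow> real)"
  by (rule integrable_measure_pmf_finite[OF finite_supp])

lemma marg:
  assumes "xh \<in> cube d" "j < d"
  shows "measure_pmf.expectation (prodBern d xh) (\<lambda>x. of_bool (x j)) = xh j"
proof -
  have "measure_pmf.expectation (prodBern d xh) (\<lambda>x. of_bool (x j))
     = measure_pmf.expectation (map_pmf (\<lambda>f. f j) (prodBern d xh)) (of_bool :: bool \<Rightarrow> real)"
    by (simp add: integral_map_pmf)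
  also have "map_pmf (\<lambda>f. f j) (prodBern d xh) = bernoulli_pmf (xh j)"
    unfolding prodBern_def using assms(2) by (subst Pi_pmf_component) auto
  finally show ?thesis using assms unfolding cube_def by simp
qed

lemma lin:
  assumes "xh \<in> cube d"
  shows "measure_pmf.expectation (prodBern d xh) (\<lambda>x. \<Sum>j<d. c j * of_bool (x j)) = (\<Sum>j<d. c j * xh j)"
  proof -
  have "measure_pmf.expectation (prodBern d xh) (\<lambda>x. \<Sum>j<d. c j * of_bool (x j))
      = (\<Sum>j<d. measure_pmf.expectation (prodBern d xh) (\<lambda>x. c j * of_bool (x j)))"
    by (rule Bochner_Integration.integral_sum) (rule integ)
  also have "\<dots> = (\<Sum>j<d. c j * xh j)"
    by (intro sum.cong refl) (simp only: integral_mult_right_zero marg[OF assms] lessThan_iff)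
  finally show ?thesis .
qed

lemma ev_alt: "exp_viol m d A b xh = measure_pmf.expectation (prodBern d xh)
      (\<lambda>x. \<Sum>i<m. max ((\<Sum>j<d. A i j * of_bool (x j)) - b i) 0)"
  unfolding exp_viol_def by (simp add: integ)

lemma ev_nonneg: "exp_viol m d A b xh \<ge> 0"
  unfolding exp_viol_def by (intro sum_nonneg integral_nonneg_AE) auto

lemma f_alt:
  assumes "xh \<in> cube d"
  shows "(\<Sum>j<d. c j * xh j) + \<mu> * exp_viol m d A b xh = measure_pmf.expectation (prodBern d xh)
      (\<lambda>x. (\<Sum>j<d. c j * of_bool (x j)) + \<mu> * (\<Sum>i<m. max ((\<Sum>j<d. A i j * of_bool (x j)) - b i) 0))"
  by (simp add: ev_alt lin[OF assms, symmetric] integ)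

lemma bern_bool: "bernoulli_pmf (of_bool t) = return_pmf t"
  by (rule pmf_eqI) (cases t; simp add: pmf_return; case_tac i; simp)

lemma CS_bound:
  fixes x z :: "nat \<Rightarrow> bool"
  shows "(\<Sum>j<d. c j * of_bool (z j)) - (\<Sum>j<d. c j * of_bool (x j)) \<le> sqrt (real d) * enorm d c"
proof -
  have "(\<Sum>j<d. c j * of_bool (z j)) - (\<Sum>j<d. c j * of_bool (x j))
      = (\<Sum>j<d. c j * (of_bool (z j) - of_bool (x j)))"
    by (simp only: sum_subtractf[symmetric] right_diff_distrib)
  also have "\<dots> \<le> (\<Sum>j<d. \<bar>c j\<bar> * \<bar>of_bool (z j) - of_bool (x j)\<bar>)"
    by (intro sum_mono) (simp add: abs_mult[symmetric])
  also have "\<dots> \<le> L2_set c {..<d} * L2_set (\<lambda>j. of_bool (z j) - of_bool (x j)) {..<d}"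
    by (rule L2_set_mult_ineq)
  also have "L2_set (\<lambda>j. of_bool (z j) - of_bool (x j) :: real) {..<d} \<le> sqrt (real d)"
    unfolding L2_set_def
  proof (rule real_sqrt_le_mono)
    have "(\<Sum>j<d. (of_bool (z j) - of_bool (x j) :: real)\<^sup>2) \<le> (\<Sum>j<d. 1)"
      by (intro sum_mono) (simp add: of_bool_def)
    then show "(\<Sum>j<d. (of_bool (z j) - of_bool (x j) :: real)\<^sup>2) \<le> real d" by simp
  qed
  then have "L2_set c {..<d} * L2_set (\<lambda>j. of_bool (z j) - of_bool (x j)) {..<d} \<le> L2_set c {..<d} * sqrt (real d)"
    by (intro mult_left_mono) (simp_all add: L2_set_def sum_nonneg)
  finally show ?thesis by (simp add: enorm_def L2_set_def mult.commute)
qed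

lemma finite_binvecs: "finite (binvecs d)"
proof -
  have "binvecs d \<subseteq> {f. \<forall>x. (x \<in> {..<d} \<longrightarrow> f x \<in> {0,1}) \<and> (x \<notin> {..<d} \<longrightarrow> f x = 0)}"
    unfolding binvecs_def by auto
  then show ?thesis using finite_set_of_finite_funs[of "{..<d}" "{0::real,1}" 0] finite_subset by blast
qed

lemma delta_props:
  shows "delta m d A b > 0"
    and "\<And>x i. x \<in> Vset d \<Longrightarrow> i < m \<Longrightarrow> (\<Sum>j<d. A i j * of_bool (x j)) - b i > 0 \<Longrightarrow>
          delta m d A b \<le> (\<Sum>j<d. A i j * of_bool (x j)) - b i"
proof -
  define T where "T = (\<Union>i<m. {(\<Sum>j<d. A i j * x j) - b i | x. x \<in> binvecs d})"
  have dd: "delta m d A b = Min ({1} \<union> (T \<inter> {0<..}))" unfolding delta_def T_def ..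
  have fT: "finite T"
  proof -
    have "\<And>i. {(\<Sum>j<d. A i j * x j) - b i | x. x \<in> binvecs d} = (\<lambda>x. (\<Sum>j<d. A i j * x j) - b i) ` binvecs d"
      by (simp only: Setcompr_eq_image)
    then show ?thesis unfolding T_def using finite_binvecs by (intro finite_UN_I) simp_all
  qed
  have fin: "finite ({1} \<union> (T \<inter> {0<..}))" using fT by simp
  have "\<forall>a\<in>{1} \<union> (T \<inter> {0<..}). (0::real) < a" by simp
  then show "delta m d A b > 0" unfolding dd by (subst Min_gr_iff[OF fin]) simp_all
  fix x i assume x: "x \<in> Vset d" and i: "i < m" and pos: "(\<Sum>j<d. A i j * of_bool (x j)) - b i > 0"
  have xb: "(\<lambda>j. of_bool (x j) :: real) \<in> binvecs d" using x unfolding binvecs_def Vset_def by auto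
  have "(\<Sum>j<d. A i j * of_bool (x j)) - b i \<in> {(\<Sum>j<d. A i j * x j) - b i | x. x \<in> binvecs d}"
    by (rule CollectI, rule exI[of _ "\<lambda>j. of_bool (x j) :: real"]) (simp add: xb)
  then have "(\<Sum>j<d. A i j * of_bool (x j)) - b i \<in> T" unfolding T_def
    using i by (intro UN_I[of i]) simp_all
  then have "(\<Sum>j<d. A i j * of_bool (x j)) - b i \<in> {1} \<union> (T \<inter> {0<..})" using pos by simp
  then show "delta m d A b \<le> (\<Sum>j<d. A i j * of_bool (x j)) - b i" unfolding dd
    using fin by (rule Min_le[rotated])
qed


theorem theorem2:
  fixes m d :: nat and A :: "nat \<Rightarrow> nat \<Rightarrow> real" and b c :: "nat \<Rightarrow> real" and \<mu> :: real
  assumes feasible: "\<exists>x\<in>binvecs d. \<forall>i<m. (\<Sum>j<d. A i j * x j) \<le> b i"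
    and mu: "\<mu> > 2 * sqrt (real d) * enorm d c / delta m d A b"
  shows "argmin_on (\<lambda>xh. (\<Sum>j<d. c j * xh j) + \<mu> * exp_viol m d A b xh) (cube d)
       = argmin_on (\<lambda>xh. \<Sum>j<d. c j * xh j) {xh \<in> cube d. exp_viol m d A b xh = 0}"
proof -
  define C where "C = (\<lambda>x::nat\<Rightarrow>bool. \<Sum>j<d. c j * of_bool (x j))"
  define G where "G = (\<lambda>x::nat\<Rightarrow>bool. \<Sum>i<m. max ((\<Sum>j<d. A i j * of_bool (x j)) - b i) 0)"
  define h where "h = (\<lambda>x. C x + \<mu> * G x)"
  define f where "f = (\<lambda>xh. (\<Sum>j<d. c j * xh j) + \<mu> * exp_viol m d A b xh)"
  define V where "V = exp_viol m d A b"
  define \<delta> where "\<delta> = delta m d A b"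
  have dpos: "\<delta> > 0" unfolding \<delta>_def by (rule delta_props(1))
  have en: "enorm d c \<ge> 0" unfolding enorm_def by (simp add: sum_nonneg)
  have "2 * sqrt (real d) * enorm d c / \<delta> \<ge> 0" using dpos en by simp
  with mu have mu0: "\<mu> \<ge> 0" unfolding \<delta>_def by linarith
  from mu have mud: "\<mu> * \<delta> > 2 * sqrt (real d) * enorm d c"
    unfolding \<delta>_def[symmetric] using dpos by (simp add: pos_divide_less_eq)
  have Gnn: "G x \<ge> 0" for x unfolding G_def by (intro sum_nonneg) simp
  define Zs where "Zs = {x \<in> Vset d. G x = 0}"
  have fZ: "finite Zs" unfolding Zs_def using finite_Vset by simp
  obtain x0 where x0: "x0 \<in> binvecs d" "\<forall>i<m. (\<Sum>j<d. A i j * x0 j) \<le> b i" using feasible by blast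
  define z0 where "z0 = (\<lambda>j. x0 j = 1)"
  have z0eq: "of_bool (z0 j) = x0 j" if "j < d" for j
    using x0(1) that unfolding binvecs_def z0_def by auto
  have "z0 \<in> Zs"
  proof -
    have "z0 \<in> Vset d" using x0(1) unfolding binvecs_def z0_def Vset_def by auto
    moreover have "G z0 = 0" unfolding G_def
    proof (intro sum.neutral ballI)
      fix i assume "i \<in> {..<m}"
      then have "(\<Sum>j<d. A i j * of_bool (z0 j)) = (\<Sum>j<d. A i j * x0 j)" by (intro sum.cong) (simp_all add: z0eq)
      then show "max ((\<Sum>j<d. A i j * of_bool (z0 j)) - b i) 0 = 0" using x0(2) \<open>i \<in> {..<m}\<close> by simp
    qed
    ultimately show ?thesis unfolding Zs_def by simp
  qed
  then have neZ: "C ` Zs \<noteq> {}" by blast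
  obtain z where z: "z \<in> Zs" "C z = Min (C ` Zs)" using Min_in[OF finite_imageI[OF fZ] neZ] by auto
  have zmin: "C z \<le> C x" if "x \<in> Zs" for x unfolding z(2) using that by (intro Min_le finite_imageI fZ imageI)
  have hz: "h x \<ge> C z" and hzs: "G x > 0 \<Longrightarrow> h x > C z" if x: "x \<in> Vset d" for x
  proof -
    show "G x > 0 \<Longrightarrow> h x > C z"
    proof -
      assume "G x > 0"
      have "\<exists>i\<in>{..<m}. max ((\<Sum>j<d. A i j * of_bool (x j)) - b i) 0 \<noteq> 0"
      proof (rule ccontr)
        assume "\<not> ?thesis"
        then have "G x = 0" unfolding G_def by (intro sum.neutral) simp
        with \<open>G x > 0\<close> show False by simp
      qed
      then obtain i where i: "i < m" "max ((\<Sum>j<d. A i j * of_bool (x j)) - b i) 0 \<noteq> 0"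
        by blast
      have pos: "(\<Sum>j<d. A i j * of_bool (x j)) - b i > 0" using i(2) by (simp add: max_def split: if_splits)
      have "\<delta> \<le> (\<Sum>j<d. A i j * of_bool (x j)) - b i" unfolding \<delta>_def by (rule delta_props(2)[of x d i m A b, OF x i(1) pos])
      also have "\<dots> = max ((\<Sum>j<d. A i j * of_bool (x j)) - b i) 0" using pos by simp
      also have "\<dots> \<le> G x" unfolding G_def
        by (rule member_le_sum[where f = "\<lambda>i. max ((\<Sum>j<d. A i j * of_bool (x j)) - b i) 0"]) (simp_all add: i(1))
      finally have "\<mu> * \<delta> \<le> \<mu> * G x" using mu0 by (simp add: mult_left_mono)
      moreover have "C z - C x \<le> sqrt (real d) * enorm d c" unfolding C_def by (rule CS_bound)
      moreover have "sqrt (real d) * enorm d c \<ge> 0" using en by simp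
      ultimately show "h x > C z" unfolding h_def using mud by linarith
    qed
    show "h x \<ge> C z"
    proof (cases "G x > 0")
      case True then show ?thesis using \<open>G x > 0 \<Longrightarrow> h x > C z\<close> by simp
    next
      case False
      then have "G x = 0" using Gnn[of x] by simp
      then have "x \<in> Zs" unfolding Zs_def using x by simp
      then show ?thesis using zmin \<open>G x = 0\<close> unfolding h_def by simp
    qed
  qed
  define zr where "zr = (\<lambda>j. of_bool (z j) :: real)"
  have zV: "z \<in> Vset d" and Gz: "G z = 0" using z(1) unfolding Zs_def by simp_all
  have zr_cube: "zr \<in> cube d" using zV unfolding zr_def cube_def Vset_def by simp
  have pz: "prodBern d zr = return_pmf z"
  proof -
    have "prodBern d zr = Pi_pmf {..<d} False (\<lambda>j. return_pmf (z j))"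
      unfolding prodBern_def zr_def by (simp only: bern_bool)
    also have "\<dots> = return_pmf (\<lambda>j. if j \<in> {..<d} then z j else False)" by simp
    also have "(\<lambda>j. if j \<in> {..<d} then z j else False) = z" using zV unfolding Vset_def by auto
    finally show ?thesis .
  qed
  have Vz: "V zr = 0" unfolding V_def ev_alt pz G_def[symmetric]
    by (subst integral_measure_pmf_real[where A="{z}"]) (simp_all add: Gz)
  have czr: "(\<Sum>j<d. c j * zr j) = C z" unfolding zr_def C_def ..
  have K1: "f xh \<ge> C z" and K2: "V xh > 0 \<Longrightarrow> f xh > C z" if xh: "xh \<in> cube d" for xh
  proof -
    define M where "M = prodBern d xh"
    define S where "S = set_pmf M"
    have fS: "finite S" unfolding S_def M_def by (rule finite_supp)
    have SV: "S \<subseteq> Vset d" unfolding S_def M_def by (rule supp_prodBern)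
    have "f xh = measure_pmf.expectation M h"
      unfolding f_def f_alt[OF xh] M_def h_def C_def G_def ..
    also have "\<dots> = (\<Sum>a\<in>S. h a * pmf M a)"
      by (rule integral_measure_pmf_real) (simp_all add: fS[unfolded S_def] S_def)
    finally have fx: "f xh = (\<Sum>a\<in>S. h a * pmf M a)" .
    have "V xh = measure_pmf.expectation M G"
      unfolding V_def ev_alt M_def G_def ..
    also have "\<dots> = (\<Sum>a\<in>S. G a * pmf M a)"
      by (rule integral_measure_pmf_real) (simp_all add: fS[unfolded S_def] S_def)
    finally have Vx: "V xh = (\<Sum>a\<in>S. G a * pmf M a)" .
    have cz: "C z = (\<Sum>a\<in>S. C z * pmf M a)"
      using sum_pmf_eq_1[OF fS] by (simp add: S_def sum_distrib_left[symmetric])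
    have diff: "f xh - C z = (\<Sum>a\<in>S. (h a - C z) * pmf M a)"
      unfolding fx by (subst cz) (simp add: sum_subtractf[symmetric] left_diff_distrib)
    have nn: "\<And>a. a \<in> S \<Longrightarrow> 0 \<le> (h a - C z) * pmf M a"
      using hz SV by (intro mult_nonneg_nonneg) auto
    show "f xh \<ge> C z" using diff sum_nonneg[of S "\<lambda>a. (h a - C z) * pmf M a", OF nn] by simp
    assume "V xh > 0"
    have "\<exists>a\<in>S. G a * pmf M a \<noteq> 0"
    proof (rule ccontr)
      assume "\<not> ?thesis"
      then have "V xh = 0" unfolding Vx by (intro sum.neutral) simp
      with \<open>V xh > 0\<close> show False by simp
    qed
    then obtain a where a: "a \<in> S" "G a * pmf M a \<noteq> 0" by blast
    then have "G a > 0" using Gnn[of a] by (cases "G a = 0") simp_all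
    then have "h a > C z" using hzs SV a(1) by blast
    moreover have "pmf M a > 0" using a(1) unfolding S_def by (rule pmf_positive)
    ultimately have "0 < (h a - C z) * pmf M a" by simp
    then have "0 < (\<Sum>a\<in>S. (h a - C z) * pmf M a)" using fS a(1) nn by (intro sum_pos2) 
    then show "f xh > C z" using diff by simp
  qed
  have fzr: "f zr = C z" unfolding f_def V_def[symmetric] Vz czr by simp
  have Vnn: "V x \<ge> 0" for x unfolding V_def by (rule ev_nonneg)
  have fF: "f x = (\<Sum>j<d. c j * x j)" if "V x = 0" for x unfolding f_def V_def[symmetric] using that by simp
  have main: "argmin_on f (cube d) = argmin_on (\<lambda>xh. \<Sum>j<d. c j * xh j) {xh \<in> cube d. V xh = 0}"
  proof (rule set_eqI, rule iffI)
    fix x assume "x \<in> argmin_on f (cube d)"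
    then have x: "x \<in> cube d" "\<forall>y\<in>cube d. f x \<le> f y" unfolding argmin_on_def by simp_all
    have "f x \<le> f zr" using x(2) zr_cube by blast
    then have fxz: "f x \<le> C z" using fzr by simp
    have Vx0: "V x = 0"
    proof (rule ccontr)
      assume "V x \<noteq> 0"
      then have "V x > 0" using Vnn[of x] by simp
      then have "f x > C z" by (rule K2[OF x(1)])
      with fxz show False by simp
    qed
    have "\<forall>y\<in>{xh \<in> cube d. V xh = 0}. (\<Sum>j<d. c j * x j) \<le> (\<Sum>j<d. c j * y j)"
    proof
      fix y assume "y \<in> {xh \<in> cube d. V xh = 0}"
      then have y: "y \<in> cube d" "V y = 0" by simp_all
      have "f x \<le> f y" using x(2) y(1) by blast
      then show "(\<Sum>j<d. c j * x j) \<le> (\<Sum>j<d. c j * y j)" using fF[OF Vx0] fF[OF y(2)] by simp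
    qed
    then show "x \<in> argmin_on (\<lambda>xh. \<Sum>j<d. c j * xh j) {xh \<in> cube d. V xh = 0}"
      unfolding argmin_on_def using x(1) Vx0 by simp
  next
    fix x assume "x \<in> argmin_on (\<lambda>xh. \<Sum>j<d. c j * xh j) {xh \<in> cube d. V xh = 0}"
    then have x: "x \<in> cube d" "V x = 0" "\<forall>y\<in>{xh \<in> cube d. V xh = 0}. (\<Sum>j<d. c j * x j) \<le> (\<Sum>j<d. c j * y j)"
      unfolding argmin_on_def by simp_all
    have "zr \<in> {xh \<in> cube d. V xh = 0}" using zr_cube Vz by simp
    then have "(\<Sum>j<d. c j * x j) \<le> (\<Sum>j<d. c j * zr j)" using x(3) by blast
    then have fxz: "f x \<le> C z" using fF[OF x(2)] czr by simp
    have "\<forall>y\<in>cube d. f x \<le> f y"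
    proof
      fix y assume "y \<in> cube d"
      then have "C z \<le> f y" by (rule K1)
      with fxz show "f x \<le> f y" by simp
    qed
    then show "x \<in> argmin_on f (cube d)" unfolding argmin_on_def using x(1) by simp
  qed
  then show ?thesis unfolding f_def V_def .
qed

end
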